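(* Let $E$ be a real symmetric $(n+m)\times(n+m)$ matrix. The following are equivalent: (a) $E\in\mathcal{E}_{n+m}$, i.e. there exist real unit vectors $a_1,\ldots,a_n,b_1,\ldots,b_m$ (in some $\mathbb{R}^r$) with $E={\rm Gram}(a_1,\ldots,a_n,b_1,\ldots,b_m)$. (b) There exist $d\ge 1$ and $d\times d$ Hermitian matrices $A_1,\ldots,A_n,B_1,\ldots,B_m$ such that (i) $E={\rm Gram}(A_1,\ldots,A_n,B_1,\ldots,B_m)$ and (ii) $A_i^2=B_j^2=\frac1d I_d$ for all $i\in\{1,\ldots,n\}$, $j\in\{1,\ldots,m\}$. (c) There exist $d\ge1$ and $d\times d$ Hermitian matrices $X_1,\ldots,X_n,Y_1,\ldots,Y_m,K$ such that (i) $E={\rm Gram}(KX_1,\ldots,KX_n,Y_1K,\ldots,Y_mK)$; (ii) $X_i^2=Y_j^2=I_d$ for all $i\in\{1,\ldots,n\}$, $j\in\{1,\ldots,m\}$; (iii) $\mathrm{Tr}(K^2)=1$ and $K$ is positive definite.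
   Context: $\mathcal{E}_{N}$ denotes the elliptope: the set of real symmetric positive semidefinite $N\times N$ matrices with all diagonal entries equal to $1$. For real vectors, ${\rm Gram}(v_1,\ldots,v_N)$ is the matrix with entries $\langle v_i,v_j\rangle$; for $d\times d$ complex matrices $M_1,\ldots,M_N$, ${\rm Gram}(M_1,\ldots,M_N)$ is the $N\times N$ matrix with $(i,j)$ entry $\mathrm{Tr}(M_iM_j^* )$. *)

theory Defs
  imports "Jordan_Normal_Form.Matrix"
begin

definition mtrace :: "'a::comm_ring_1 mat \<Rightarrow> 'a" where
  "mtrace A = (\<Sum>i<dim_row A. A $$ (i,i))"

definition ctrans :: "complex mat \<Rightarrow> complex mat" where
  "ctrans A = mat (dim_col A) (dim_row A) (\<lambda>(i,j). cnj (A $$ (j,i)))"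

definition hermitian :: "complex mat \<Rightarrow> bool" where
  "hermitian A \<longleftrightarrow> A \<in> carrier_mat (dim_row A) (dim_row A) \<and> ctrans A = A"

definition pos_def :: "complex mat \<Rightarrow> bool" where
  "pos_def K \<longleftrightarrow> hermitian K \<and>
     (\<forall>v \<in> carrier_vec (dim_row K). v \<noteq> 0\<^sub>v (dim_row K) \<longrightarrow>
        0 < Re (conjugate v \<bullet> (K *\<^sub>v v)))"

definition psd_real :: "nat \<Rightarrow> real mat \<Rightarrow> bool" where
  "psd_real N E \<longleftrightarrow> E \<in> carrier_mat N N \<and> transpose_mat E = E \<and>
     (\<forall>v \<in> carrier_vec N. 0 \<le> v \<bullet> (E *\<^sub>v v))"

definition elliptope :: "nat \<Rightarrow> real mat set" where
  "elliptope N = {E. psd_real N E \<and> (\<forall>i<N. E $$ (i,i) = 1)}"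

definition concat_fam :: "nat \<Rightarrow> (nat \<Rightarrow> 'a) \<Rightarrow> (nat \<Rightarrow> 'a) \<Rightarrow> nat \<Rightarrow> 'a" where
  "concat_fam n x y k = (if k < n then x k else y (k - n))"

definition gram_vec :: "nat \<Rightarrow> (nat \<Rightarrow> real vec) \<Rightarrow> real mat" where
  "gram_vec N v = mat N N (\<lambda>(i,j). v i \<bullet> v j)"

definition gram_mat :: "nat \<Rightarrow> (nat \<Rightarrow> complex mat) \<Rightarrow> complex mat" where
  "gram_mat N M = mat N N (\<lambda>(i,j). mtrace (M i * ctrans (M j)))"

definition complex_of_mat :: "real mat \<Rightarrow> complex mat" where
  "complex_of_mat E = map_mat complex_of_real E"

end

theory Submission
  imports Defs
begin

lemma sc_lemmas:
  fixes C D :: "'a::comm_ring_1 mat"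
  assumes C: "C \<in> carrier_mat N N" and D: "D \<in> carrier_mat N N"
  shows "(a \<cdot>\<^sub>m 1\<^sub>m N) * (b \<cdot>\<^sub>m 1\<^sub>m N) = (a*b) \<cdot>\<^sub>m 1\<^sub>m N"
    "C * (b \<cdot>\<^sub>m 1\<^sub>m N) = b \<cdot>\<^sub>m C"
    "(a \<cdot>\<^sub>m 1\<^sub>m N) * D = a \<cdot>\<^sub>m D"
    "(a \<cdot>\<^sub>m 1\<^sub>m N) * (- D) = - (a \<cdot>\<^sub>m D)"
    "(- C) * (b \<cdot>\<^sub>m 1\<^sub>m N) = - (b \<cdot>\<^sub>m C)"
    "(- C) * (- D) = C * D"
proof -
  have I: "1\<^sub>m N \<in> carrier_mat N N" by simp
  show 1: "(a \<cdot>\<^sub>m 1\<^sub>m N) * (b \<cdot>\<^sub>m 1\<^sub>m N) = (a*b) \<cdot>\<^sub>m 1\<^sub>m N"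
    by (rule eq_matI) (auto simp: mult_smult_distrib[OF smult_carrier_mat[OF I] I] mult_smult_assoc_mat[OF I I])
  show 2: "C * (b \<cdot>\<^sub>m 1\<^sub>m N) = b \<cdot>\<^sub>m C"
    using C by (simp add: mult_smult_distrib[OF C I])
  show 3: "(a \<cdot>\<^sub>m 1\<^sub>m N) * D = a \<cdot>\<^sub>m D"
    using D by (simp add: mult_smult_assoc_mat[OF I D])
  show "(a \<cdot>\<^sub>m 1\<^sub>m N) * (- D) = - (a \<cdot>\<^sub>m D)"
    using D 3 by (intro eq_matI) (auto simp: mult_smult_assoc_mat[OF I] )
  show "(- C) * (b \<cdot>\<^sub>m 1\<^sub>m N) = - (b \<cdot>\<^sub>m C)"
    using C by (intro eq_matI) (auto simp: mult_smult_distrib[OF _ I])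
  show "(- C) * (- D) = C * D"
    using C D by (intro eq_matI) (auto simp: scalar_prod_def intro!: sum.cong)
qed

lemma blk:
  fixes C D :: "complex mat"
  assumes C: "C \<in> carrier_mat N N" and D: "D \<in> carrier_mat N N"
    and IH: "C * D + D * C = s \<cdot>\<^sub>m 1\<^sub>m N"
  shows "four_block_mat C (a \<cdot>\<^sub>m 1\<^sub>m N) (a \<cdot>\<^sub>m 1\<^sub>m N) (- C) * four_block_mat D (b \<cdot>\<^sub>m 1\<^sub>m N) (b \<cdot>\<^sub>m 1\<^sub>m N) (- D)
   + four_block_mat D (b \<cdot>\<^sub>m 1\<^sub>m N) (b \<cdot>\<^sub>m 1\<^sub>m N) (- D) * four_block_mat C (a \<cdot>\<^sub>m 1\<^sub>m N) (a \<cdot>\<^sub>m 1\<^sub>m N) (- C)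
   = (s + 2*a*b) \<cdot>\<^sub>m 1\<^sub>m (N+N)"
proof -
  have e: "(C*D) $$ (i,j) + (D*C) $$ (i,j) = s * (if i = j then 1 else 0)" if "i<N" "j<N" for i j
  proof -
    have "(C * D + D * C) $$ (i,j) = (s \<cdot>\<^sub>m 1\<^sub>m N) $$ (i,j)" using IH by simp
    moreover have "(C * D + D * C) $$ (i,j) = (C*D) $$ (i,j) + (D*C) $$ (i,j)"
      using that C D by (intro index_add_mat) auto
    ultimately show ?thesis using that by simp
  qed
  have m: "four_block_mat C (a \<cdot>\<^sub>m 1\<^sub>m N) (a \<cdot>\<^sub>m 1\<^sub>m N) (- C) * four_block_mat D (b \<cdot>\<^sub>m 1\<^sub>m N) (b \<cdot>\<^sub>m 1\<^sub>m N) (- D)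
     = four_block_mat (C * D + (a*b) \<cdot>\<^sub>m 1\<^sub>m N) (b \<cdot>\<^sub>m C + - (a \<cdot>\<^sub>m D))
        (a \<cdot>\<^sub>m D + - (b \<cdot>\<^sub>m C)) ((a*b) \<cdot>\<^sub>m 1\<^sub>m N + C * D)"
    if C: "C \<in> carrier_mat N N" and D: "D \<in> carrier_mat N N" for C D and a b :: complex
    using C D by (subst mult_four_block_mat[of _ N N _ N _ N _ _ N _ N]) (auto simp: sc_lemmas[OF C D])
  have c2: "C * D \<in> carrier_mat N N" "D * C \<in> carrier_mat N N" using C D by auto
  have dd: "dim_row (C*D) = N" "dim_col (C*D)=N" "dim_row (D*C)=N" "dim_col (D*C) = N"
    "dim_row C = N" "dim_col C = N" "dim_row D = N" "dim_col D = N" using C D by auto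
  show ?thesis
    unfolding m[OF C D] m[OF D C]
    apply (rule eq_matI)
    using C D c2 e apply (auto simp del: index_mult_mat simp: dd)
    done
qed

fun cl :: "nat \<Rightarrow> (nat \<Rightarrow> real) \<Rightarrow> complex mat" where
  "cl 0 x = mat 1 1 (\<lambda>_. complex_of_real (x 0))"
| "cl (Suc p) x = four_block_mat (cl p x) (complex_of_real (x (Suc p)) \<cdot>\<^sub>m 1\<^sub>m (2^p))
     (complex_of_real (x (Suc p)) \<cdot>\<^sub>m 1\<^sub>m (2^p)) (- cl p x)"

lemma cl_carrier[simp]: "cl p x \<in> carrier_mat (2^p) (2^p)"
proof (induction p)
  case 0 show ?case by simp
next
  case (Suc p)
  have "cl (Suc p) x \<in> carrier_mat (2^p + 2^p) (2^p + 2^p)"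
    unfolding cl.simps(2) by (rule four_block_carrier_mat) (use Suc in simp_all)
  then show ?case by (simp add: mult_2)
qed

lemma cl_dims[simp]: "dim_row (cl p x) = 2^p" "dim_col (cl p x) = 2^p"
  using cl_carrier[of p x] unfolding carrier_mat_def by auto

lemma cl_anti: "cl p x * cl p y + cl p y * cl p x
   = complex_of_real (2 * (\<Sum>k\<le>p. x k * y k)) \<cdot>\<^sub>m 1\<^sub>m (2^p)"
proof (induction p)
  case 0
  show ?case by (rule eq_matI) (auto simp: scalar_prod_def)
next
  case (Suc p)
  have H: "cl (Suc p) x * cl (Suc p) y + cl (Suc p) y * cl (Suc p) x
     = (complex_of_real (2 * (\<Sum>k\<le>p. x k * y k)) + 2 * complex_of_real (x (Suc p)) * complex_of_real (y (Suc p)))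
        \<cdot>\<^sub>m 1\<^sub>m (2^p + 2^p)"
    unfolding cl.simps(2) by (rule blk[OF cl_carrier cl_carrier Suc.IH])
  have E1: "(2::nat)^Suc p = 2^p + 2^p" by simp
  have E2: "complex_of_real (2 * (\<Sum>k\<le>Suc p. x k * y k)) = complex_of_real (2 * (\<Sum>k\<le>p. x k * y k)) + 2 * complex_of_real (x (Suc p)) * complex_of_real (y (Suc p))"
    by (simp add: distrib_left)
  show ?case unfolding E1 E2 by (rule H)
qed

lemma cl_cnj: "i < 2^p \<Longrightarrow> j < 2^p \<Longrightarrow> cnj (cl p x $$ (i,j)) = cl p x $$ (j,i)"
proof (induction p arbitrary: i j)
  case 0
  then show ?case by simp
next
  case (Suc p)
  have ij: "i < 2^p + 2^p" "j < 2^p + 2^p" using Suc.prems by simp_all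
  show ?case unfolding cl.simps(2) using ij by (simp add: Suc.IH)
qed

lemma cl_herm: "hermitian (cl p x)"
  unfolding hermitian_def ctrans_def
  by (auto intro!: eq_matI simp: cl_cnj)

lemma mtrace_comm:
  fixes A B :: "'a::comm_ring_1 mat"
  assumes "A \<in> carrier_mat d d" "B \<in> carrier_mat d d"
  shows "mtrace (A * B) = mtrace (B * A)"
proof -
  have "mtrace (A * B) = (\<Sum>i<d. \<Sum>k<d. A $$ (i,k) * B $$ (k,i))"
    using assms unfolding mtrace_def by (simp add: scalar_prod_def atLeast0LessThan)
  also have "\<dots> = (\<Sum>k<d. \<Sum>i<d. B $$ (k,i) * A $$ (i,k))"
    by (subst sum.swap) (simp add: mult.commute)
  also have "\<dots> = mtrace (B * A)"
    using assms unfolding mtrace_def by (simp add: scalar_prod_def atLeast0LessThan)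
  finally show ?thesis .
qed

lemma mtrace_add:
  fixes A B :: "'a::comm_ring_1 mat"
  assumes "A \<in> carrier_mat d d" "B \<in> carrier_mat d d"
  shows "mtrace (A + B) = mtrace A + mtrace B"
  using assms unfolding mtrace_def by (simp add: sum.distrib)

lemma mtrace_smult:
  fixes A :: "'a::comm_ring_1 mat"
  assumes "A \<in> carrier_mat d d"
  shows "mtrace (c \<cdot>\<^sub>m A) = c * mtrace A"
  using assms unfolding mtrace_def by (simp add: sum_distrib_left)

lemma mtrace_one: "mtrace (1\<^sub>m d :: 'a::comm_ring_1 mat) = of_nat d"
  unfolding mtrace_def by simp

lemma herm_ctrans: "hermitian X \<Longrightarrow> ctrans X = X"
  unfolding hermitian_def by simp

lemma trace_anti:
  fixes X Y :: "complex mat"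
  assumes "X \<in> carrier_mat d d" "Y \<in> carrier_mat d d" "X * Y + Y * X = s \<cdot>\<^sub>m 1\<^sub>m d"
  shows "mtrace (X * Y) = s * of_nat d / 2"
proof -
  have "s * of_nat d = mtrace (X * Y + Y * X)" using assms(3) by (simp add: mtrace_smult[of "1\<^sub>m d" d] mtrace_one)
  also have "\<dots> = mtrace (X * Y) + mtrace (Y * X)" using assms by (intro mtrace_add) auto
  also have "\<dots> = 2 * mtrace (X * Y)" using mtrace_comm[OF assms(1,2)] by simp
  finally show ?thesis by simp
qed

lemma half_eq:
  fixes X :: "complex mat"
  assumes "X \<in> carrier_mat d d" "X * X + X * X = 2 \<cdot>\<^sub>m 1\<^sub>m d"
  shows "X * X = 1\<^sub>m d"
proof (rule eq_matI)
  fix i j assume ij: "i < dim_row (1\<^sub>m d :: complex mat)" "j < dim_col (1\<^sub>m d :: complex mat)"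
  have "(X * X + X * X) $$ (i,j) = (2 \<cdot>\<^sub>m 1\<^sub>m d) $$ (i,j)" using assms(2) by simp
  moreover have "(X*X + X*X) $$ (i,j) = (X*X)$$(i,j) + (X*X)$$(i,j)"
    by (rule index_add_mat(1)) (use ij assms in auto)
  ultimately have "(X*X) $$ (i,j) + (X*X) $$ (i,j) = 2 * (1\<^sub>m d) $$ (i,j)"
    using ij by simp
  then show "(X * X) $$ (i, j) = 1\<^sub>m d $$ (i, j)" by simp
qed (use assms in auto)

lemma ctrans_smult: "ctrans (c \<cdot>\<^sub>m A) = cnj c \<cdot>\<^sub>m ctrans A"
  unfolding ctrans_def by (rule eq_matI) auto

lemma ctrans_carrier: "A \<in> carrier_mat d d \<Longrightarrow> ctrans A \<in> carrier_mat d d"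
  unfolding ctrans_def by auto

lemma xsum:
  assumes "u \<in> carrier_vec r" "v \<in> carrier_vec r"
  shows "(\<Sum>t\<le>r. (if t < r then u $ t else 0) * (if t < r then v $ t else 0)) = u \<bullet> v"
proof -
  have "{..r} = insert r {..<r}" by auto
  then have "(\<Sum>t\<le>r. (if t < r then u $ t else 0) * (if t < r then v $ t else 0))
      = (\<Sum>t<r. u $ t * v $ t)" by simp
  also have "\<dots> = u \<bullet> v" using assms by (simp add: scalar_prod_def atLeast0LessThan mult.commute)
  finally show ?thesis .
qed

locale cons =
  fixes w :: "nat \<Rightarrow> real vec" and r N :: nat
  assumes wc: "\<And>k. k < N \<Longrightarrow> w k \<in> carrier_vec r"
begin

definition "xx k t = (if t < r then w k $ t else 0)"
definition "dd = (2::nat)^r"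
definition "cc = complex_of_real (1 / sqrt (real dd))"
definition "Ga k = cl r (xx k)"
definition "GG k = cc \<cdot>\<^sub>m Ga k"

lemma dd_pos: "dd \<ge> 1" unfolding dd_def by simp

lemma Ga_carrier: "Ga k \<in> carrier_mat dd dd" unfolding Ga_def dd_def by simp
lemma GG_carrier: "GG k \<in> carrier_mat dd dd" unfolding GG_def using Ga_carrier by simp
lemma Ga_herm: "hermitian (Ga k)" unfolding Ga_def by (rule cl_herm)
lemma GG_herm: "hermitian (GG k)"
  using Ga_herm[of k] GG_carrier[of k] unfolding GG_def hermitian_def
  by (simp add: ctrans_smult cc_def)

lemma anti: "k < N \<Longrightarrow> l < N \<Longrightarrow>
   Ga k * Ga l + Ga l * Ga k = complex_of_real (2 * (w k \<bullet> w l)) \<cdot>\<^sub>m 1\<^sub>m dd"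
  unfolding Ga_def dd_def using cl_anti[of r "xx k" "xx l"] xsum[OF wc wc, of k l]
  by (simp add: xx_def)

lemma Ga_sq: "k < N \<Longrightarrow> w k \<bullet> w k = 1 \<Longrightarrow> Ga k * Ga k = 1\<^sub>m dd"
  using anti[of k k] by (intro half_eq[OF Ga_carrier]) simp

lemma cc_sq: "cc * cc = 1 / of_nat dd"
proof -
  have "real dd > 0" using dd_pos by simp
  then have "(1 / sqrt (real dd)) * (1 / sqrt (real dd)) = 1 / real dd"
    by (simp add: real_sqrt_mult[symmetric])
  then show ?thesis unfolding cc_def by (metis of_real_mult of_real_divide of_real_1 of_real_of_nat_eq)
qed

lemma GG_sq: "k < N \<Longrightarrow> w k \<bullet> w k = 1 \<Longrightarrow> GG k * GG k = (1 / of_nat dd) \<cdot>\<^sub>m 1\<^sub>m dd"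
proof -
  assume a: "k < N" "w k \<bullet> w k = 1"
  have "GG k * GG k = cc \<cdot>\<^sub>m (cc \<cdot>\<^sub>m (Ga k * Ga k))"
    unfolding GG_def using Ga_carrier[of k]
    by (simp add: mult_smult_distrib[of _ dd dd] mult_smult_assoc_mat[of _ dd dd])
  also have "\<dots> = (cc * cc) \<cdot>\<^sub>m 1\<^sub>m dd" using Ga_sq[OF a] by (auto intro!: eq_matI)
  finally show ?thesis by (simp add: cc_sq)
qed

lemma tr_GG: "k < N \<Longrightarrow> l < N \<Longrightarrow> mtrace (GG k * ctrans (GG l)) = complex_of_real (w k \<bullet> w l)"
proof -
  assume a: "k < N" "l < N"
  have "GG k * ctrans (GG l) = GG k * GG l" using herm_ctrans[OF GG_herm] by simp
  also have "\<dots> = cc \<cdot>\<^sub>m (cc \<cdot>\<^sub>m (Ga k * Ga l))"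
    unfolding GG_def using Ga_carrier[of k] Ga_carrier[of l]
    by (simp add: mult_smult_distrib[of _ dd dd] mult_smult_assoc_mat[of _ dd dd])
  also have "\<dots> = (cc * cc) \<cdot>\<^sub>m (Ga k * Ga l)" by (auto intro!: eq_matI)
  finally have "mtrace (GG k * ctrans (GG l)) = (cc * cc) * mtrace (Ga k * Ga l)"
    using Ga_carrier[of k] Ga_carrier[of l] by (simp add: mtrace_smult[of _ dd])
  also have "mtrace (Ga k * Ga l) = complex_of_real (2 * (w k \<bullet> w l)) * of_nat dd / 2"
    by (rule trace_anti[OF Ga_carrier Ga_carrier anti[OF a]])
  finally show ?thesis using dd_pos by (simp add: cc_sq)
qed

lemma gram_GG: "gram_mat N GG = complex_of_mat (gram_vec N w)"
  unfolding gram_mat_def complex_of_mat_def gram_vec_def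
  by (rule eq_matI) (auto simp: tr_GG)

end

lemma qf_gen:
  fixes v :: "nat \<Rightarrow> 'a::comm_ring_1" and f g :: "nat \<Rightarrow> 'b \<Rightarrow> 'a"
  shows "(\<Sum>i<N. v i * (\<Sum>j<N. (\<Sum>t\<in>T. f i t * g j t) * v j))
       = (\<Sum>t\<in>T. (\<Sum>i<N. v i * f i t) * (\<Sum>j<N. v j * g j t))"
proof -
  have "(\<Sum>i<N. v i * (\<Sum>j<N. (\<Sum>t\<in>T. f i t * g j t) * v j))
      = (\<Sum>i<N. \<Sum>j<N. \<Sum>t\<in>T. (v i * f i t) * (v j * g j t))"
    by (simp add: sum_distrib_left sum_distrib_right mult_ac)
  also have "\<dots> = (\<Sum>i<N. \<Sum>t\<in>T. \<Sum>j<N. (v i * f i t) * (v j * g j t))"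
    by (simp add: sum.swap[of _ T])
  also have "\<dots> = (\<Sum>t\<in>T. \<Sum>i<N. \<Sum>j<N. (v i * f i t) * (v j * g j t))"
    by (rule sum.swap)
  also have "\<dots> = (\<Sum>t\<in>T. (\<Sum>i<N. v i * f i t) * (\<Sum>j<N. v j * g j t))"
    by (simp add: sum_product)
  finally show ?thesis .
qed

lemma quad_vec: "v \<in> carrier_vec N \<Longrightarrow> E \<in> carrier_mat N N \<Longrightarrow>
   v \<bullet> (E *\<^sub>v v) = (\<Sum>i<N. v $ i * (\<Sum>j<N. E $$ (i,j) * v $ j))"
  by (simp add: scalar_prod_def atLeast0LessThan row_def)

lemma gram_vec_psd:
  assumes wc: "\<And>k. k < N \<Longrightarrow> w k \<in> carrier_vec r"
  shows "psd_real N (gram_vec N w)"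
  unfolding psd_real_def
proof (intro conjI ballI)
  show "gram_vec N w \<in> carrier_mat N N" unfolding gram_vec_def by simp
  show "transpose_mat (gram_vec N w) = gram_vec N w"
    unfolding gram_vec_def using wc by (auto intro!: eq_matI comm_scalar_prod)
  fix v :: "real vec" assume v: "v \<in> carrier_vec N"
  have ent: "\<And>i j. i<N \<Longrightarrow> j<N \<Longrightarrow> gram_vec N w $$ (i,j) = (\<Sum>t<r. w i $ t * w j $ t)"
  proof -
    fix i j assume "i<N" "j<N"
    have "dim_vec (w j) = r" using carrier_vecD[OF wc[OF \<open>j<N\<close>]] .
    then show "gram_vec N w $$ (i,j) = (\<Sum>t<r. w i $ t * w j $ t)"
      using \<open>i<N\<close> \<open>j<N\<close> by (simp add: gram_vec_def scalar_prod_def atLeast0LessThan)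
  qed
  have "v \<bullet> (gram_vec N w *\<^sub>v v) = (\<Sum>i<N. v $ i * (\<Sum>j<N. gram_vec N w $$ (i,j) * v $ j))"
    by (rule quad_vec) (use v in \<open>auto simp: gram_vec_def\<close>)
  also have "\<dots> = (\<Sum>i<N. v $ i * (\<Sum>j<N. (\<Sum>t<r. w i $ t * w j $ t) * v $ j))"
  proof (rule sum.cong[OF refl])
    fix i assume "i \<in> {..<N}"
    then have "(\<Sum>j<N. gram_vec N w $$ (i,j) * v $ j) = (\<Sum>j<N. (\<Sum>t<r. w i $ t * w j $ t) * v $ j)"
      by (intro sum.cong refl) (simp add: ent)
    then show "v $ i * (\<Sum>j<N. gram_vec N w $$ (i,j) * v $ j) = v $ i * (\<Sum>j<N. (\<Sum>t<r. w i $ t * w j $ t) * v $ j)"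
      by simp
  qed
  also have "\<dots> = (\<Sum>t<r. (\<Sum>i<N. v $ i * w i $ t) * (\<Sum>j<N. v $ j * w j $ t))"
    by (rule qf_gen)
  also have "\<dots> \<ge> 0" by (intro sum_nonneg) simp
  finally show "0 \<le> v \<bullet> (gram_vec N w *\<^sub>v v)" .
qed

lemma mtrace_ctrans:
  assumes A: "A \<in> carrier_mat d d" and B: "B \<in> carrier_mat d d"
  shows "mtrace (A * ctrans B) = (\<Sum>pq \<in> {..<d} \<times> {..<d}. A $$ pq * cnj (B $$ pq))"
proof -
  have "mtrace (A * ctrans B) = (\<Sum>p<d. \<Sum>q<d. A $$ (p,q) * cnj (B $$ (p,q)))"
    using A B unfolding mtrace_def ctrans_def
    by (simp add: scalar_prod_def atLeast0LessThan)
  also have "\<dots> = (\<Sum>pq \<in> {..<d} \<times> {..<d}. A $$ pq * cnj (B $$ pq))"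
    by (simp add: sum.cartesian_product)
  finally show ?thesis .
qed

lemma gram_mat_psd:
  assumes Mc: "\<And>k. k < N \<Longrightarrow> M k \<in> carrier_mat d d"
    and EG: "complex_of_mat E = gram_mat N M"
    and Ec: "E \<in> carrier_mat N N" and Et: "transpose_mat E = E"
  shows "psd_real N E"
  unfolding psd_real_def
proof (intro conjI ballI Ec Et)
  fix v :: "real vec" assume v: "v \<in> carrier_vec N"
  let ?T = "{..<d} \<times> {..<d}"
  have ent: "complex_of_real (E $$ (i,j)) = (\<Sum>pq \<in> ?T. M i $$ pq * cnj (M j $$ pq))"
    if "i<N" "j<N" for i j
  proof -
    have "complex_of_mat E $$ (i,j) = gram_mat N M $$ (i,j)" using EG by simp
    then have "complex_of_real (E $$ (i,j)) = mtrace (M i * ctrans (M j))"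
      using that Ec unfolding complex_of_mat_def gram_mat_def by simp
    then show ?thesis using mtrace_ctrans[OF Mc[OF \<open>i<N\<close>] Mc[OF \<open>j<N\<close>]] by simp
  qed
  have "complex_of_real (v \<bullet> (E *\<^sub>v v)) = complex_of_real (\<Sum>i<N. v $ i * (\<Sum>j<N. E $$ (i,j) * v $ j))"
    using quad_vec[OF v Ec] by simp
  also have "\<dots> = (\<Sum>i<N. complex_of_real (v $ i) * (\<Sum>j<N. complex_of_real (E $$ (i,j)) * complex_of_real (v $ j)))"
    by simp
  also have "\<dots> = (\<Sum>i<N. complex_of_real (v $ i) * (\<Sum>j<N. (\<Sum>pq \<in> ?T. M i $$ pq * cnj (M j $$ pq)) * complex_of_real (v $ j)))"
  proof (rule sum.cong[OF refl])
    fix i assume i: "i \<in> {..<N}"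
    have "(\<Sum>j<N. complex_of_real (E $$ (i,j)) * complex_of_real (v $ j)) = (\<Sum>j<N. (\<Sum>pq \<in> ?T. M i $$ pq * cnj (M j $$ pq)) * complex_of_real (v $ j))"
      by (rule sum.cong[OF refl]) (use i ent in simp)
    then show "complex_of_real (v $ i) * (\<Sum>j<N. complex_of_real (E $$ (i,j)) * complex_of_real (v $ j)) = complex_of_real (v $ i) * (\<Sum>j<N. (\<Sum>pq \<in> ?T. M i $$ pq * cnj (M j $$ pq)) * complex_of_real (v $ j))"
      by simp
  qed
  also have "\<dots> = (\<Sum>pq \<in> ?T. (\<Sum>i<N. complex_of_real (v $ i) * M i $$ pq) * (\<Sum>j<N. complex_of_real (v $ j) * cnj (M j $$ pq)))"
    by (rule qf_gen)
  also have "\<dots> = (\<Sum>pq \<in> ?T. of_real ((cmod (\<Sum>i<N. complex_of_real (v $ i) * M i $$ pq))\<^sup>2))"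
  proof (rule sum.cong[OF refl])
    fix pq
    let ?z = "(\<Sum>i<N. complex_of_real (v $ i) * M i $$ pq)"
    have "cnj ?z = (\<Sum>j<N. complex_of_real (v $ j) * cnj (M j $$ pq))" by simp
    then show "?z * (\<Sum>j<N. complex_of_real (v $ j) * cnj (M j $$ pq)) = of_real ((cmod ?z)\<^sup>2)"
      by (metis complex_norm_square norm_complex_def)
  qed
  also have "\<dots> = complex_of_real (\<Sum>pq \<in> ?T. (cmod (\<Sum>i<N. complex_of_real (v $ i) * M i $$ pq))\<^sup>2)"
    by simp
  finally have "v \<bullet> (E *\<^sub>v v) = (\<Sum>pq \<in> ?T. (cmod (\<Sum>i<N. complex_of_real (v $ i) * M i $$ pq))\<^sup>2)"
    using of_real_eq_iff by blast
  also have "\<dots> \<ge> 0" by (intro sum_nonneg) simp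
  finally show "0 \<le> v \<bullet> (E *\<^sub>v v)" .
qed

definition Qf :: "nat \<Rightarrow> (nat \<Rightarrow> nat \<Rightarrow> real) \<Rightarrow> (nat \<Rightarrow> real) \<Rightarrow> real" where
  "Qf N E v = (\<Sum>i<N. v i * (\<Sum>j<N. E i j * v j))"

lemma Qf_Suc: "Qf (Suc N) E v = Qf N E v + v N * (\<Sum>i<N. E i N * v i) + v N * (\<Sum>j<N. E N j * v j)
   + v N * E N N * v N"
  unfolding Qf_def
  by (simp add: distrib_left sum.distrib sum_distrib_left sum_distrib_right mult_ac)

lemma Qf_cong: "(\<And>i. i < N \<Longrightarrow> v i = v' i) \<Longrightarrow> Qf N E v = Qf N E v'"
proof -
  assume a: "\<And>i. i < N \<Longrightarrow> v i = v' i"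
  have h: "(\<Sum>j<N. E i j * v j) = (\<Sum>j<N. E i j * v' j)" for i
    by (rule sum.cong[OF refl]) (simp add: a)
  show ?thesis unfolding Qf_def by (rule sum.cong[OF refl]) (simp add: a h)
qed

lemma dl1: "i < (N::nat) \<Longrightarrow> (\<Sum>t<N. (if t = i then x else 0) * f t) = x * (f i :: real)"
proof -
  assume "i < N"
  have "(\<Sum>t<N. (if t = i then x else 0) * f t) = (\<Sum>t<N. if t = i then x * f t else 0)"
    by (rule sum.cong) auto
  also have "\<dots> = x * f i" using \<open>i<N\<close> by (subst sum.delta) auto
  finally show ?thesis .
qed

lemma dl2: "i < (N::nat) \<Longrightarrow> (\<Sum>t<N. f t * (if t = i then x else 0)) = f i * (x :: real)"
proof -
  assume "i < N"
  have "(\<Sum>t<N. f t * (if t = i then x else 0)) = (\<Sum>t<N. if t = i then f t * x else 0)"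
    by (rule sum.cong) auto
  also have "\<dots> = f i * x" using \<open>i<N\<close> by (subst sum.delta) auto
  finally show ?thesis .
qed

lemma Qf_two:
  assumes "i < N"
  shows "Qf (Suc N) E (\<lambda>t. if t = i then x else if t = N then y else 0)
     = x * E i i * x + y * (E i N * x) + y * (E N i * x) + y * E N N * y"
proof -
  let ?v = "\<lambda>t. if t = i then x else if t = N then y else 0"
  have "Qf N E ?v = Qf N E (\<lambda>t. if t = i then x else 0)" by (rule Qf_cong) simp
  also have "\<dots> = x * E i i * x" using assms unfolding Qf_def
    by (simp add: dl1 dl2)
  finally have 1: "Qf N E ?v = x * E i i * x" .
  have "(\<Sum>t<N. E t N * ?v t) = (\<Sum>t<N. E t N * (if t = i then x else 0))"
    by (rule sum.cong[OF refl]) simp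
  then have 2: "(\<Sum>t<N. E t N * ?v t) = E i N * x" using assms by (simp add: dl2)
  have "(\<Sum>t<N. E N t * ?v t) = (\<Sum>t<N. E N t * (if t = i then x else 0))"
    by (rule sum.cong[OF refl]) simp
  then have 3: "(\<Sum>t<N. E N t * ?v t) = E N i * x" using assms by (simp add: dl2)
  show ?thesis unfolding Qf_Suc 1 2 3 using assms by simp
qed

lemma Qf_last: "Qf (Suc N) E (\<lambda>t. if t = N then y else 0) = y * E N N * y"
proof -
  have "Qf N E (\<lambda>t. if t = N then y else 0) = Qf N E (\<lambda>t. 0)" by (rule Qf_cong) simp
  moreover have "Qf N E (\<lambda>t. 0) = 0" unfolding Qf_def by simp
  moreover have "(\<Sum>i<N. E i N * (if i = N then y else 0)) = 0" by (rule sum.neutral) simp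
  moreover have "(\<Sum>i<N. E N i * (if i = N then y else 0)) = 0" by (rule sum.neutral) simp
  ultimately show ?thesis unfolding Qf_Suc by simp
qed

lemma Qf_rank1: "Qf N (\<lambda>i j. E i j - c i * c j / a) v = Qf N E v - (\<Sum>i<N. c i * v i) * (\<Sum>i<N. c i * v i) / a"
proof -
  have "Qf N (\<lambda>i j. E i j - c i * c j / a) v = (\<Sum>i<N. v i * ((\<Sum>j<N. E i j * v j) - c i * (\<Sum>j<N. c j * v j) / a))"
  proof -
    have h: "(\<Sum>j<N. (E i j - c i * c j / a) * v j) = (\<Sum>j<N. E i j * v j) - c i * (\<Sum>j<N. c j * v j) / a" for i
    proof -
      have "(\<Sum>j<N. (E i j - c i * c j / a) * v j) = (\<Sum>j<N. E i j * v j - (c i / a) * (c j * v j))"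
        by (rule sum.cong[OF refl]) (simp add: algebra_simps)
      also have "\<dots> = (\<Sum>j<N. E i j * v j) - (c i / a) * (\<Sum>j<N. c j * v j)"
        by (simp add: sum_subtractf sum_distrib_left)
      finally show ?thesis by simp
    qed
    show ?thesis unfolding Qf_def h ..
  qed
  also have "\<dots> = Qf N E v - (\<Sum>i<N. c i * v i) * (\<Sum>i<N. c i * v i) / a"
    unfolding Qf_def
    by (simp add: right_diff_distrib sum_subtractf sum_distrib_left sum_distrib_right sum_divide_distrib mult_ac)
  finally show ?thesis .
qed

lemma chol:
  "(\<forall>i<N. \<forall>j<N. E i j = E j i) \<Longrightarrow> (\<forall>v. 0 \<le> Qf N E v) \<Longrightarrow>
   \<exists>(r::nat) u. \<forall>i<N. \<forall>j<N. E i j = (\<Sum>k<r. u i k * u j k)"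
proof (induction N arbitrary: E)
  case 0
  then show ?case by auto
next
  case (Suc N)
  note sym = Suc.prems(1) and psd = Suc.prems(2)
  define \<alpha> where "\<alpha> = E N N"
  have cs: "E N i = E i N" if "i < N" for i using sym that by auto
  have two: "0 \<le> x * E i i * x + 2 * y * E i N * x + y * \<alpha> * y" if "i < N" for i x y
  proof -
    have "0 \<le> Qf (Suc N) E (\<lambda>t. if t = i then x else if t = N then y else 0)" using psd by blast
    then show ?thesis unfolding Qf_two[OF that] cs[OF that] \<alpha>_def by (simp add: algebra_simps)
  qed
  have a0: "\<alpha> \<ge> 0"
  proof -
    have "0 \<le> Qf (Suc N) E (\<lambda>t. if t = N then 1 else 0)" using psd by blast
    then show ?thesis unfolding Qf_last \<alpha>_def by simp
  qed
  show ?case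
  proof (cases "\<alpha> > 0")
    case True
    define c where "c i = E i N" for i
    define F where "F i j = E i j - c i * c j / \<alpha>" for i j
    have Fsym: "\<forall>i<N. \<forall>j<N. F i j = F j i" using sym unfolding F_def by (auto simp: mult.commute)
    have Fpsd: "\<forall>v. 0 \<le> Qf N F v"
    proof
      fix v
      define S where "S = (\<Sum>i<N. c i * v i)"
      define v' where "v' t = (if t < N then v t else - S / \<alpha>)" for t
      have e1: "Qf N E v' = Qf N E v" by (rule Qf_cong) (simp add: v'_def)
      have e2: "(\<Sum>i<N. E i N * v' i) = S" unfolding S_def c_def
        by (rule sum.cong[OF refl]) (simp add: v'_def)
      have e3: "(\<Sum>i<N. E N i * v' i) = S" unfolding S_def c_def
        by (rule sum.cong[OF refl]) (simp add: v'_def cs)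
      have "Qf (Suc N) E v' = Qf N E v - S * S / \<alpha>"
        unfolding Qf_Suc e1 e2 e3 \<alpha>_def[symmetric] using True
        by (simp add: v'_def field_simps power2_eq_square)
      moreover have "Qf N F v = Qf N E v - S * S / \<alpha>"
        unfolding F_def S_def by (rule Qf_rank1)
      ultimately show "0 \<le> Qf N F v" using psd by metis
    qed
    obtain r :: nat and u where u: "\<forall>i<N. \<forall>j<N. F i j = (\<Sum>k<r. u i k * u j k)"
      using Suc.IH[OF Fsym Fpsd] by blast
    define u' where "u' i k = (if k < r then (if i < N then u i k else 0)
        else (if i < N then c i / sqrt \<alpha> else sqrt \<alpha>))" for i k
    have sq: "sqrt \<alpha> * sqrt \<alpha> = \<alpha>" using a0 by simp
    have main: "E i j = (\<Sum>k<Suc r. u' i k * u' j k)" if ij: "i < Suc N" "j < Suc N" for i j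
    proof -
      have s: "(\<Sum>k<Suc r. u' i k * u' j k) = (\<Sum>k<r. u' i k * u' j k) + u' i r * u' j r" by simp
      consider "i < N" "j < N" | "i < N" "j = N" | "i = N" "j < N" | "i = N" "j = N"
        using ij by linarith
      then show ?thesis
      proof cases
        case 1
        have "(\<Sum>k<r. u' i k * u' j k) = (\<Sum>k<r. u i k * u j k)"
          by (rule sum.cong[OF refl]) (simp add: u'_def 1)
        then show ?thesis unfolding s using u 1 True sq
          by (simp add: u'_def F_def c_def field_simps)
      next
        case 2
        have "(\<Sum>k<r. u' i k * u' j k) = 0"
          by (rule sum.neutral) (simp add: u'_def 2)
        then show ?thesis unfolding s using 2 True sq
          by (simp add: u'_def c_def field_simps)
      next
        case 3
        have "(\<Sum>k<r. u' i k * u' j k) = 0"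
          by (rule sum.neutral) (simp add: u'_def 3)
        then show ?thesis unfolding s using 3 True sq cs[of j]
          by (simp add: u'_def c_def field_simps)
      next
        case 4
        have "(\<Sum>k<r. u' i k * u' j k) = 0"
          by (rule sum.neutral) (simp add: u'_def 4)
        then show ?thesis unfolding s using 4 sq by (simp add: u'_def \<alpha>_def)
      qed
    qed
    show ?thesis by (rule exI[of _ "Suc r"], rule exI[of _ u']) (use main in blast)
  next
    case False
    then have az: "\<alpha> = 0" using a0 by simp
    have cz: "E i N = 0" if "i < N" for i
    proof (rule ccontr)
      assume ne: "E i N \<noteq> 0"
      have "0 \<le> 1 * E i i * 1 + 2 * (- (E i i + 1) / (2 * E i N)) * E i N * 1 + (- (E i i + 1) / (2 * E i N)) * \<alpha> * (- (E i i + 1) / (2 * E i N))"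
        by (rule two[OF that])
      then show False using ne az by (simp add: field_simps)
    qed
    have Epsd: "\<forall>v. 0 \<le> Qf N E v"
    proof
      fix v
      define v' where "v' t = (if t < N then v t else (0::real))" for t
      have "Qf N E v' = Qf N E v" by (rule Qf_cong) (simp add: v'_def)
      moreover have "v' N = 0" by (simp add: v'_def)
      ultimately have "Qf (Suc N) E v' = Qf N E v" unfolding Qf_Suc by simp
      then show "0 \<le> Qf N E v" using psd by metis
    qed
    have Esym: "\<forall>i<N. \<forall>j<N. E i j = E j i" using sym by auto
    obtain r :: nat and u where u: "\<forall>i<N. \<forall>j<N. E i j = (\<Sum>k<r. u i k * u j k)"
      using Suc.IH[OF Esym Epsd] by blast
    define u' where "u' i k = (if i < N then u i k else 0)" for i k
    have main: "E i j = (\<Sum>k<r. u' i k * u' j k)" if ij: "i < Suc N" "j < Suc N" for i j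
    proof -
      consider "i < N" "j < N" | "i = N \<or> j = N"
        using ij by linarith
      then show ?thesis
      proof cases
        case 1
        then show ?thesis using u by (simp add: u'_def)
      next
        case 2
        then have "E i j = 0" using cz cs az ij unfolding \<alpha>_def by (metis less_antisym)
        then show ?thesis using 2 by (auto simp: u'_def)
      qed
    qed
    show ?thesis by (rule exI[of _ r], rule exI[of _ u']) (use main in blast)
  qed
qed

lemma smult_mat_vec: "A \<in> carrier_mat nr nc \<Longrightarrow> v \<in> carrier_vec nc \<Longrightarrow> (c \<cdot>\<^sub>m A) *\<^sub>v v = c \<cdot>\<^sub>v (A *\<^sub>v v)"
  by (rule eq_vecI) (auto simp: scalar_prod_def sum_distrib_left mult_ac)

lemma ctrans_mult:
  assumes A: "A \<in> carrier_mat a b" and B: "B \<in> carrier_mat b c"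
  shows "ctrans (A * B) = ctrans B * ctrans A"
  using A B unfolding ctrans_def
  by (intro eq_matI) (auto simp: scalar_prod_def mult.commute)

lemma pos_def_scalar:
  assumes c: "c > 0" and d: "d \<ge> 1"
  shows "pos_def (complex_of_real c \<cdot>\<^sub>m 1\<^sub>m d)"
  unfolding pos_def_def
proof (intro conjI ballI impI)
  show "hermitian (complex_of_real c \<cdot>\<^sub>m 1\<^sub>m d)"
    unfolding hermitian_def ctrans_def by (auto intro!: eq_matI)
  fix v :: "complex vec"
  assume v: "v \<in> carrier_vec (dim_row (complex_of_real c \<cdot>\<^sub>m 1\<^sub>m d))"
    and nz: "v \<noteq> 0\<^sub>v (dim_row (complex_of_real c \<cdot>\<^sub>m 1\<^sub>m d))"
  have v': "v \<in> carrier_vec d" using v by simp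
  have "(complex_of_real c \<cdot>\<^sub>m 1\<^sub>m d) *\<^sub>v v = complex_of_real c \<cdot>\<^sub>v v"
    using smult_mat_vec[of "1\<^sub>m d" d d v "complex_of_real c"] v' by simp
  then have "conjugate v \<bullet> ((complex_of_real c \<cdot>\<^sub>m 1\<^sub>m d) *\<^sub>v v)
     = complex_of_real c * (\<Sum>i<d. cnj (v $ i) * v $ i)"
    using v' by (simp add: scalar_prod_def atLeast0LessThan sum_distrib_left mult_ac)
  also have "\<dots> = complex_of_real (c * (\<Sum>i<d. (cmod (v $ i))\<^sup>2))"
  proof -
    have nz2: "cnj z * z = complex_of_real ((cmod z)\<^sup>2)" for z using complex_norm_square[of z] by (metis mult.commute)
    show ?thesis by (simp only: nz2 of_real_mult of_real_sum)
  qed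
  finally have eq: "Re (conjugate v \<bullet> ((complex_of_real c \<cdot>\<^sub>m 1\<^sub>m d) *\<^sub>v v)) = c * (\<Sum>i<d. (cmod (v $ i))\<^sup>2)"
    by simp
  have "\<exists>i<d. v $ i \<noteq> 0"
  proof (rule ccontr)
    assume "\<not> (\<exists>i<d. v $ i \<noteq> 0)"
    then have "v = 0\<^sub>v d" using v' by (intro eq_vecI) auto
    with nz show False by simp
  qed
  then obtain i where i: "i < d" "v $ i \<noteq> 0" by blast
  have "0 < (\<Sum>i<d. (cmod (v $ i))\<^sup>2)"
  proof -
    have "(cmod (v $ i))\<^sup>2 \<le> (\<Sum>i<d. (cmod (v $ i))\<^sup>2)"
      by (rule member_le_sum) (use i in auto)
    moreover have "0 < (cmod (v $ i))\<^sup>2" using i by simp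
    ultimately show ?thesis by linarith
  qed
  then show "0 < Re (conjugate v \<bullet> ((complex_of_real c \<cdot>\<^sub>m 1\<^sub>m d) *\<^sub>v v))"
    unfolding eq using c by simp
qed

lemma ell_to_vec:
  assumes "E \<in> elliptope N"
  shows "\<exists>r w. (\<forall>k<N. w k \<in> carrier_vec r \<and> w k \<bullet> w k = 1) \<and> E = gram_vec N w"
proof -
  have Ec: "E \<in> carrier_mat N N" and Et: "transpose_mat E = E"
    and Ep: "\<forall>v \<in> carrier_vec N. 0 \<le> v \<bullet> (E *\<^sub>v v)" and Ed: "\<forall>i<N. E $$ (i,i) = 1"
    using assms unfolding elliptope_def psd_real_def by auto
  define Ef where "Ef i j = E $$ (i,j)" for i j
  have sym: "\<forall>i<N. \<forall>j<N. Ef i j = Ef j i"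
  proof (intro allI impI)
    fix i j assume ij: "i < N" "j < N"
    have "transpose_mat E $$ (i,j) = E $$ (j,i)" using ij Ec by simp
    then show "Ef i j = Ef j i" unfolding Ef_def using Et by simp
  qed
  have psd: "\<forall>v. 0 \<le> Qf N Ef v"
  proof
    fix v :: "nat \<Rightarrow> real"
    have vc: "vec N v \<in> carrier_vec N" by simp
    have "vec N v \<bullet> (E *\<^sub>v vec N v) = (\<Sum>i<N. vec N v $ i * (\<Sum>j<N. E $$ (i,j) * vec N v $ j))"
      by (rule quad_vec[OF vc Ec])
    also have "\<dots> = Qf N Ef v" unfolding Qf_def Ef_def
    proof (rule sum.cong[OF refl])
      fix i assume i: "i \<in> {..<N}"
      have "(\<Sum>j<N. E $$ (i,j) * vec N v $ j) = (\<Sum>j<N. E $$ (i,j) * v j)"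
        by (rule sum.cong[OF refl]) simp
      then show "vec N v $ i * (\<Sum>j<N. E $$ (i,j) * vec N v $ j) = v i * (\<Sum>j<N. E $$ (i,j) * v j)"
        using i by simp
    qed
    finally show "0 \<le> Qf N Ef v" using Ep vc by metis
  qed
  obtain r :: nat and u where u: "\<forall>i<N. \<forall>j<N. Ef i j = (\<Sum>k<r. u i k * u j k)"
    using chol[OF sym psd] by blast
  define w where "w k = vec r (u k)" for k
  have wc: "w k \<in> carrier_vec r" for k unfolding w_def by simp
  have wp: "w i \<bullet> w j = E $$ (i,j)" if "i < N" "j < N" for i j
    using u that unfolding w_def Ef_def by (simp add: scalar_prod_def atLeast0LessThan)
  have "E = gram_vec N w"
    by (rule eq_matI) (use Ec wp in \<open>auto simp: gram_vec_def\<close>)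
  moreover have "\<forall>k<N. w k \<in> carrier_vec r \<and> w k \<bullet> w k = 1" using wc wp Ed by simp
  ultimately show ?thesis by blast
qed

lemma concat_cases:
  assumes "\<And>i. i < n \<Longrightarrow> P (x i)" "\<And>j. j < m \<Longrightarrow> P (y j)" "k < n + m"
  shows "P (concat_fam n x y k)"
  using assms unfolding concat_fam_def by (cases "k < n") auto

lemma from_a:
  assumes a: "\<forall>i<n. a i \<in> carrier_vec r \<and> a i \<bullet> a i = 1"
    and b: "\<forall>j<m. b j \<in> carrier_vec r \<and> b j \<bullet> b j = 1"
    and E: "E = gram_vec (n+m) (concat_fam n a b)"
  shows "E \<in> elliptope (n+m)"
proof -
  define w where "w = concat_fam n a b"
  have wc: "w k \<in> carrier_vec r \<and> w k \<bullet> w k = 1" if "k < n+m" for k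
    unfolding w_def by (rule concat_cases[where P="\<lambda>v. v \<in> carrier_vec r \<and> v \<bullet> v = 1"]) (use a b that in auto)
  have "psd_real (n+m) (gram_vec (n+m) w)" by (rule gram_vec_psd) (use wc in blast)
  moreover have "\<forall>i<n+m. gram_vec (n+m) w $$ (i,i) = 1" using wc by (simp add: gram_vec_def)
  ultimately show ?thesis unfolding elliptope_def E w_def by simp
qed

lemma a_to_bc:
  assumes a: "\<forall>i<n. a i \<in> carrier_vec r \<and> a i \<bullet> a i = 1"
    and b: "\<forall>j<m. b j \<in> carrier_vec r \<and> b j \<bullet> b j = 1"
    and E: "E = gram_vec (n+m) (concat_fam n a b)"
  shows "(\<exists>d::nat. \<exists>A B. d \<ge> 1
               \<and> (\<forall>i<n. A i \<in> carrier_mat d d \<and> hermitian (A i)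
                        \<and> A i * A i = (1 / of_nat d) \<cdot>\<^sub>m 1\<^sub>m d)
               \<and> (\<forall>j<m. B j \<in> carrier_mat d d \<and> hermitian (B j)
                        \<and> B j * B j = (1 / of_nat d) \<cdot>\<^sub>m 1\<^sub>m d)
               \<and> complex_of_mat E = gram_mat (n+m) (concat_fam n A B))
    \<and> (\<exists>d::nat. \<exists>X Y K. d \<ge> 1
               \<and> (\<forall>i<n. X i \<in> carrier_mat d d \<and> hermitian (X i) \<and> X i * X i = 1\<^sub>m d)
               \<and> (\<forall>j<m. Y j \<in> carrier_mat d d \<and> hermitian (Y j) \<and> Y j * Y j = 1\<^sub>m d)
               \<and> K \<in> carrier_mat d d \<and> hermitian K \<and> pos_def K \<and> mtrace (K * K) = 1
               \<and> complex_of_mat E =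
                   gram_mat (n+m) (concat_fam n (\<lambda>i. K * X i) (\<lambda>j. Y j * K)))"
proof -
  define w where "w = concat_fam n a b"
  have wc: "w k \<in> carrier_vec r \<and> w k \<bullet> w k = 1" if "k < n+m" for k
    unfolding w_def by (rule concat_cases[where P="\<lambda>v. v \<in> carrier_vec r \<and> v \<bullet> v = 1"]) (use a b that in auto)
  interpret C: cons w r "n+m" by unfold_locales (use wc in blast)
  have cat: "concat_fam n (\<lambda>i. f i) (\<lambda>j. f (n+j)) = f" for f :: "nat \<Rightarrow> complex mat"
    unfolding concat_fam_def by auto
  have gram: "complex_of_mat E = gram_mat (n+m) C.GG" unfolding E w_def[symmetric] by (rule C.gram_GG[symmetric])
  have sqk: "C.GG k * C.GG k = (1 / of_nat C.dd) \<cdot>\<^sub>m 1\<^sub>m C.dd" if "k < n+m" for k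
    using C.GG_sq[OF that] wc[OF that] by simp
  have sqg: "C.Ga k * C.Ga k = 1\<^sub>m C.dd" if "k < n+m" for k
    using C.Ga_sq[OF that] wc[OF that] by simp
  define K where "K = C.cc \<cdot>\<^sub>m 1\<^sub>m C.dd"
  have Kc: "K \<in> carrier_mat C.dd C.dd" unfolding K_def by simp
  have KG: "K * C.Ga k = C.GG k" for k
    unfolding K_def C.GG_def using C.Ga_carrier[of k]
    by (simp add: mult_smult_assoc_mat[of _ C.dd C.dd])
  have GK: "C.Ga k * K = C.GG k" for k
    unfolding K_def C.GG_def using sc_lemmas(2)[OF C.Ga_carrier C.Ga_carrier] .
  have cpos: "1 / sqrt (real C.dd) > 0" using C.dd_pos by simp
  have Kpd: "pos_def K" unfolding K_def C.cc_def by (rule pos_def_scalar[OF cpos C.dd_pos])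
  have Kh: "hermitian K" using Kpd unfolding pos_def_def by simp
  have KK: "mtrace (K * K) = 1"
  proof -
    have "K * K = (C.cc * C.cc) \<cdot>\<^sub>m 1\<^sub>m C.dd" unfolding K_def
      using sc_lemmas(1)[OF Kc Kc] .
    then have "mtrace (K * K) = C.cc * C.cc * of_nat C.dd" by (simp add: mtrace_smult[of _ C.dd] mtrace_one)
    then show ?thesis using C.dd_pos by (simp add: C.cc_sq)
  qed
  have cat2: "concat_fam n (\<lambda>i. K * C.Ga i) (\<lambda>j. C.Ga (n+j) * K) = C.GG"
    unfolding concat_fam_def KG GK by auto
  show ?thesis
  proof (rule conjI)
    show "\<exists>d::nat. \<exists>A B. d \<ge> 1
               \<and> (\<forall>i<n. A i \<in> carrier_mat d d \<and> hermitian (A i)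
                        \<and> A i * A i = (1 / of_nat d) \<cdot>\<^sub>m 1\<^sub>m d)
               \<and> (\<forall>j<m. B j \<in> carrier_mat d d \<and> hermitian (B j)
                        \<and> B j * B j = (1 / of_nat d) \<cdot>\<^sub>m 1\<^sub>m d)
               \<and> complex_of_mat E = gram_mat (n+m) (concat_fam n A B)"
      apply (rule exI[of _ C.dd], rule exI[of _ "\<lambda>i. C.GG i"], rule exI[of _ "\<lambda>j. C.GG (n+j)"])
      using C.dd_pos C.GG_carrier C.GG_herm sqk gram cat[of C.GG] by auto
    show "\<exists>d::nat. \<exists>X Y K. d \<ge> 1
               \<and> (\<forall>i<n. X i \<in> carrier_mat d d \<and> hermitian (X i) \<and> X i * X i = 1\<^sub>m d)
               \<and> (\<forall>j<m. Y j \<in> carrier_mat d d \<and> hermitian (Y j) \<and> Y j * Y j = 1\<^sub>m d)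
               \<and> K \<in> carrier_mat d d \<and> hermitian K \<and> pos_def K \<and> mtrace (K * K) = 1
               \<and> complex_of_mat E =
                   gram_mat (n+m) (concat_fam n (\<lambda>i. K * X i) (\<lambda>j. Y j * K))"
      apply (rule exI[of _ C.dd], rule exI[of _ "\<lambda>i. C.Ga i"], rule exI[of _ "\<lambda>j. C.Ga (n+j)"], rule exI[of _ K])
      using C.dd_pos C.Ga_carrier C.Ga_herm sqg gram cat2 Kc Kh Kpd KK by auto
  qed
qed

lemma diag_ell:
  assumes Mc: "\<And>k. k < N \<Longrightarrow> M k \<in> carrier_mat d d"
    and EG: "complex_of_mat E = gram_mat N M"
    and Ec: "E \<in> carrier_mat N N" and Et: "transpose_mat E = E"
    and diag: "\<And>k. k < N \<Longrightarrow> mtrace (M k * ctrans (M k)) = 1"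
  shows "E \<in> elliptope N"
proof -
  have "psd_real N E" by (rule gram_mat_psd[OF Mc EG Ec Et])
  moreover have "E $$ (k,k) = 1" if "k < N" for k
  proof -
    have "complex_of_mat E $$ (k,k) = gram_mat N M $$ (k,k)" using EG by simp
    then have "complex_of_real (E $$ (k,k)) = 1"
      using that Ec diag[OF that] unfolding complex_of_mat_def gram_mat_def by simp
    then show ?thesis by simp
  qed
  ultimately show ?thesis unfolding elliptope_def by simp
qed

lemma b_to_ell:
  assumes Ec: "E \<in> carrier_mat (n+m) (n+m)" and Et: "transpose_mat E = E"
    and d: "d \<ge> 1"
    and A: "\<forall>i<n. A i \<in> carrier_mat d d \<and> hermitian (A i) \<and> A i * A i = (1 / of_nat d) \<cdot>\<^sub>m 1\<^sub>m d"
    and B: "\<forall>j<m. B j \<in> carrier_mat d d \<and> hermitian (B j) \<and> B j * B j = (1 / of_nat d) \<cdot>\<^sub>m 1\<^sub>m d"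
    and EG: "complex_of_mat E = gram_mat (n+m) (concat_fam n A B)"
  shows "E \<in> elliptope (n+m)"
proof -
  let ?M = "concat_fam n A B"
  have P: "?M k \<in> carrier_mat d d \<and> hermitian (?M k) \<and> ?M k * ?M k = (1 / of_nat d) \<cdot>\<^sub>m 1\<^sub>m d"
    if "k < n+m" for k
    by (rule concat_cases[where P="\<lambda>X. X \<in> carrier_mat d d \<and> hermitian X \<and> X * X = (1 / of_nat d) \<cdot>\<^sub>m 1\<^sub>m d"])
      (use A B that in auto)
  show ?thesis
  proof (rule diag_ell[OF _ EG Ec Et])
    show "?M k \<in> carrier_mat d d" if "k < n+m" for k using P[OF that] by simp
    fix k assume k: "k < n+m"
    have "mtrace (?M k * ctrans (?M k)) = mtrace ((1 / of_nat d) \<cdot>\<^sub>m 1\<^sub>m d :: complex mat)"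
      using P[OF k] herm_ctrans by simp
    also have "\<dots> = 1" using d by (simp add: mtrace_smult[of _ d] mtrace_one)
    finally show "mtrace (?M k * ctrans (?M k)) = 1" .
  qed
qed

lemma c_to_ell:
  assumes Ec: "E \<in> carrier_mat (n+m) (n+m)" and Et: "transpose_mat E = E"
    and X: "\<forall>i<n. X i \<in> carrier_mat d d \<and> hermitian (X i) \<and> X i * X i = 1\<^sub>m d"
    and Y: "\<forall>j<m. Y j \<in> carrier_mat d d \<and> hermitian (Y j) \<and> Y j * Y j = 1\<^sub>m d"
    and Kc: "K \<in> carrier_mat d d" and Kh: "hermitian K" and KK: "mtrace (K * K) = 1"
    and EG: "complex_of_mat E = gram_mat (n+m) (concat_fam n (\<lambda>i. K * X i) (\<lambda>j. Y j * K))"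
  shows "E \<in> elliptope (n+m)"
proof -
  let ?M = "concat_fam n (\<lambda>i. K * X i) (\<lambda>j. Y j * K)"
  have Kt: "ctrans K = K" using Kh herm_ctrans by simp
  have Pi: "Z * K \<in> carrier_mat d d \<and> mtrace ((K * Z) * ctrans (K * Z)) = 1"
    if Z: "Z \<in> carrier_mat d d" "hermitian Z" "Z * Z = 1\<^sub>m d" for Z
  proof -
    have Zt: "ctrans Z = Z" using Z herm_ctrans by simp
    have "ctrans (K * Z) = Z * K" using ctrans_mult[OF Kc Z(1)] Zt Kt by simp
    then have "(K * Z) * ctrans (K * Z) = (K * Z) * (Z * K)" by simp
    also have "\<dots> = K * (Z * (Z * K))" by (rule assoc_mult_mat[OF Kc Z(1), of _ d]) (use Z(1) Kc in simp)
    also have "Z * (Z * K) = (Z * Z) * K" by (rule assoc_mult_mat[symmetric, OF Z(1) Z(1) Kc])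
    also have "\<dots> = K" using Z(3) Kc by simp
    finally show ?thesis using KK Z(1) Kc by simp
  qed
  have Pj: "mtrace ((Z * K) * ctrans (Z * K)) = 1"
    if Z: "Z \<in> carrier_mat d d" "hermitian Z" "Z * Z = 1\<^sub>m d" for Z
  proof -
    have Zt: "ctrans Z = Z" using Z herm_ctrans by simp
    have ct: "ctrans (Z * K) = K * Z" using ctrans_mult[OF Z(1) Kc] Zt Kt by simp
    have KKc: "K * K \<in> carrier_mat d d" using Kc by simp
    have "(Z * K) * ctrans (Z * K) = (Z * K) * (K * Z)" using ct by simp
    also have "\<dots> = Z * (K * (K * Z))" by (rule assoc_mult_mat[OF Z(1) Kc, of _ d]) (use Z(1) Kc in simp)
    also have "K * (K * Z) = (K * K) * Z" by (rule assoc_mult_mat[symmetric, OF Kc Kc Z(1)])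
    finally have 1: "(Z * K) * ctrans (Z * K) = Z * ((K * K) * Z)" .
    have "mtrace (Z * ((K * K) * Z)) = mtrace (((K * K) * Z) * Z)"
      by (rule mtrace_comm[OF Z(1)]) (use KKc Z(1) in simp)
    also have "((K * K) * Z) * Z = (K * K) * (Z * Z)" by (rule assoc_mult_mat[OF KKc Z(1) Z(1)])
    also have "\<dots> = K * K" using Z(3) right_mult_one_mat[OF KKc] by simp
    finally show ?thesis using KK 1 by simp
  qed
  have P: "?M k \<in> carrier_mat d d \<and> mtrace (?M k * ctrans (?M k)) = 1" if k: "k < n+m" for k
  proof (cases "k < n")
    case True
    then show ?thesis unfolding concat_fam_def using X Pi[of "X k"] Kc by auto
  next
    case False
    then have "k - n < m" using k by simp
    then show ?thesis unfolding concat_fam_def using False Y Pj[of "Y (k-n)"] Kc by auto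
  qed
  show ?thesis by (rule diag_ell[OF _ EG Ec Et]) (use P in auto)
qed

theorem lemma2p6:
  fixes n m :: nat and E :: "real mat"
  assumes "E \<in> carrier_mat (n+m) (n+m)" and "transpose_mat E = E"
  shows "(E \<in> elliptope (n+m)
      \<longleftrightarrow> (\<exists>r a b. (\<forall>i<n. a i \<in> carrier_vec r \<and> a i \<bullet> a i = 1)
               \<and> (\<forall>j<m. b j \<in> carrier_vec r \<and> b j \<bullet> b j = 1)
               \<and> E = gram_vec (n+m) (concat_fam n a b)))
    \<and> (E \<in> elliptope (n+m)
      \<longleftrightarrow> (\<exists>d::nat. \<exists>A B. d \<ge> 1
               \<and> (\<forall>i<n. A i \<in> carrier_mat d d \<and> hermitian (A i)
                        \<and> A i * A i = (1 / of_nat d) \<cdot>\<^sub>m 1\<^sub>m d)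
               \<and> (\<forall>j<m. B j \<in> carrier_mat d d \<and> hermitian (B j)
                        \<and> B j * B j = (1 / of_nat d) \<cdot>\<^sub>m 1\<^sub>m d)
               \<and> complex_of_mat E = gram_mat (n+m) (concat_fam n A B)))
    \<and> (E \<in> elliptope (n+m)
      \<longleftrightarrow> (\<exists>d::nat. \<exists>X Y K. d \<ge> 1
               \<and> (\<forall>i<n. X i \<in> carrier_mat d d \<and> hermitian (X i) \<and> X i * X i = 1\<^sub>m d)
               \<and> (\<forall>j<m. Y j \<in> carrier_mat d d \<and> hermitian (Y j) \<and> Y j * Y j = 1\<^sub>m d)
               \<and> K \<in> carrier_mat d d \<and> hermitian K \<and> pos_def K \<and> mtrace (K * K) = 1
               \<and> complex_of_mat E =
                   gram_mat (n+m) (concat_fam n (\<lambda>i. K * X i) (\<lambda>j. Y j * K))))"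
  (is "(?ell \<longleftrightarrow> ?Pa) \<and> (?ell \<longleftrightarrow> ?Pb) \<and> (?ell \<longleftrightarrow> ?Pc)")
proof -
  have ell_a: "?Pa" if ell: ?ell
  proof -
    obtain r w where w: "\<forall>k<n+m. w k \<in> carrier_vec r \<and> w k \<bullet> w k = 1" and Ew: "E = gram_vec (n+m) w"
      using ell_to_vec[OF ell] by blast
    have cat: "concat_fam n w (\<lambda>j. w (n+j)) = w" unfolding concat_fam_def by auto
    show ?thesis
      apply (rule exI[of _ r], rule exI[of _ w], rule exI[of _ "\<lambda>j. w (n+j)"])
      using w Ew cat by auto
  qed
  have a_ell: "?ell" if ?Pa using that from_a by blast
  have a_bc: "?Pb \<and> ?Pc" if ?Pa
  proof -
    obtain r a b where "\<forall>i<n. a i \<in> carrier_vec r \<and> a i \<bullet> a i = 1"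
      "\<forall>j<m. b j \<in> carrier_vec r \<and> b j \<bullet> b j = 1" "E = gram_vec (n+m) (concat_fam n a b)"
      using \<open>?Pa\<close> by blast
    then show ?thesis by (rule a_to_bc)
  qed
  have b_ell: "?ell" if ?Pb
  proof -
    obtain d A B where "d \<ge> 1"
      "\<forall>i<n. A i \<in> carrier_mat d d \<and> hermitian (A i) \<and> A i * A i = (1 / of_nat d) \<cdot>\<^sub>m 1\<^sub>m d"
      "\<forall>j<m. B j \<in> carrier_mat d d \<and> hermitian (B j) \<and> B j * B j = (1 / of_nat d) \<cdot>\<^sub>m 1\<^sub>m d"
      "complex_of_mat E = gram_mat (n+m) (concat_fam n A B)"
      using \<open>?Pb\<close> by blast
    then show ?thesis by (rule b_to_ell[OF assms])
  qed
  have c_ell: "?ell" if ?Pc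
  proof -
    obtain d X Y K where
      "\<forall>i<n. X i \<in> carrier_mat d d \<and> hermitian (X i) \<and> X i * X i = 1\<^sub>m d"
      "\<forall>j<m. Y j \<in> carrier_mat d d \<and> hermitian (Y j) \<and> Y j * Y j = 1\<^sub>m d"
      "K \<in> carrier_mat d d" "hermitian K" "mtrace (K * K) = 1"
      "complex_of_mat E = gram_mat (n+m) (concat_fam n (\<lambda>i. K * X i) (\<lambda>j. Y j * K))"
      using \<open>?Pc\<close> by blast
    then show ?thesis by (rule c_to_ell[OF assms])
  qed
  show ?thesis using ell_a a_ell a_bc b_ell c_ell by blast
qed

end
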